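(* Let $G$ be an $N$-cube Adinkra with heights disregarded (a valise $N$-cube Adinkra). Then $G$ is vertex-transitive up to the boson/fermion bipartition: for any two vertices $u,v$ that are both bosons or both fermions there is an automorphism of $G$ mapping $u$ to $v$.
   Context: An Adinkra of dimension $N$ is a finite connected simple graph $G=(V,E)$ together with: (1) a bipartition of $V$ into bosons and fermions such that every edge joins a boson and a fermion; (2) a height function (here disregarded); (3) a coloring of $E$ by colors $\{1,\dots,N\}$ such that each vertex is incident to exactly one edge of each color; (4) an edge parity $\pi:E\to\mathbb{Z}_2$ (parity $1$ = dashed). These must satisfy: every path with edge colors $(i,j)$, $i\neq j$, lies in a unique 4-cycle with colors $(i,j,i,j)$, and every such two-colored 4-cycle has an odd number of dashed edges. An $N$-cube Adinkra has $2^N$ vertices. Switching a vertex reverses the parity of all edges incident to it. An automorphism of $G$ is a permutation of $V$ preserving adjacency, edge colors and the bipartition, which becomes parity-preserving after switching some set of vertices. *)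

theory Defs
  imports Main
begin

text \<open>E is the (symmetric, irreflexive) adjacency relation, boson is the bipartition
  (boson v = True for bosons, False for fermions), col gives the color of an edge
  (meaningful only on edges), par gives the edge parity (True = dashed).\<close>

definition adinkra ::
  "nat \<Rightarrow> 'v set \<Rightarrow> ('v \<Rightarrow> 'v \<Rightarrow> bool) \<Rightarrow> ('v \<Rightarrow> bool)
     \<Rightarrow> ('v \<Rightarrow> 'v \<Rightarrow> nat) \<Rightarrow> ('v \<Rightarrow> 'v \<Rightarrow> bool) \<Rightarrow> bool" where
  "adinkra N V E boson col par \<longleftrightarrow>
     finite V \<and> V \<noteq> {} \<and>
     (\<forall>u v. E u v \<longrightarrow> u \<in> V \<and> v \<in> V) \<and>
     (\<forall>u v. E u v \<longrightarrow> E v u) \<and>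
     (\<forall>u. \<not> E u u) \<and>
     (\<forall>u\<in>V. \<forall>v\<in>V. E\<^sup>*\<^sup>* u v) \<and>
     (\<forall>u v. E u v \<longrightarrow> boson u \<noteq> boson v) \<and>
     (\<forall>u v. E u v \<longrightarrow> col u v = col v u \<and> col u v \<in> {1..N}) \<and>
     (\<forall>u v. E u v \<longrightarrow> par u v = par v u) \<and>
     (\<forall>v\<in>V. \<forall>i\<in>{1..N}. \<exists>!w. E v w \<and> col v w = i) \<and>
     (\<forall>u v w i j. i \<noteq> j \<and> E u v \<and> col u v = i \<and> E v w \<and> col v w = j \<longrightarrow>
        (\<exists>!x. E w x \<and> col w x = i \<and> E x u \<and> col x u = j)) \<and>
     (\<forall>u v w x i j. i \<noteq> j \<and> E u v \<and> col u v = i \<and> E v w \<and> col v w = j \<and>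
        E w x \<and> col w x = i \<and> E x u \<and> col x u = j \<longrightarrow>
        odd (of_bool (par u v) + of_bool (par v w) + of_bool (par w x)
             + of_bool (par x u) :: nat))"

definition cube_adinkra ::
  "nat \<Rightarrow> 'v set \<Rightarrow> ('v \<Rightarrow> 'v \<Rightarrow> bool) \<Rightarrow> ('v \<Rightarrow> bool)
     \<Rightarrow> ('v \<Rightarrow> 'v \<Rightarrow> nat) \<Rightarrow> ('v \<Rightarrow> 'v \<Rightarrow> bool) \<Rightarrow> bool" where
  "cube_adinkra N V E boson col par \<longleftrightarrow>
     adinkra N V E boson col par \<and> card V = 2 ^ N"

definition adinkra_automorphism ::
  "'v set \<Rightarrow> ('v \<Rightarrow> 'v \<Rightarrow> bool) \<Rightarrow> ('v \<Rightarrow> bool)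
     \<Rightarrow> ('v \<Rightarrow> 'v \<Rightarrow> nat) \<Rightarrow> ('v \<Rightarrow> 'v \<Rightarrow> bool) \<Rightarrow> ('v \<Rightarrow> 'v) \<Rightarrow> bool" where
  "adinkra_automorphism V E boson col par f \<longleftrightarrow>
     bij_betw f V V \<and>
     (\<forall>u\<in>V. \<forall>v\<in>V. E (f u) (f v) \<longleftrightarrow> E u v) \<and>
     (\<forall>u v. E u v \<longrightarrow> col (f u) (f v) = col u v) \<and>
     (\<forall>u\<in>V. boson (f u) = boson u) \<and>
     (\<exists>S \<subseteq> V. \<forall>u v. E u v \<longrightarrow>
        par (f u) (f v) = (par u v \<noteq> ((u \<in> S) \<noteq> (v \<in> S))))"

end

theory Submission
  imports Defs
begin

lemma odd4: "odd (of_bool a + of_bool b + of_bool c + of_bool d :: nat) \<longleftrightarrow> (a \<noteq> (b \<noteq> (c \<noteq> d)))"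
  by (cases a; cases b; cases c; cases d) auto

locale cube_ad =
  fixes N :: nat and V :: "'v set" and E :: "'v \<Rightarrow> 'v \<Rightarrow> bool"
    and boson :: "'v \<Rightarrow> bool" and col :: "'v \<Rightarrow> 'v \<Rightarrow> nat"
    and par :: "'v \<Rightarrow> 'v \<Rightarrow> bool"
  assumes cube: "cube_adinkra N V E boson col par"
begin

lemma ad: "adinkra N V E boson col par" and cardV: "card V = 2 ^ N"
  using cube unfolding cube_adinkra_def by simp_all

lemmas ads = ad[unfolded adinkra_def]

lemma finV: "finite V" using ads by (elim conjE)
lemma EV: "\<And>u v. E u v \<Longrightarrow> u \<in> V \<and> v \<in> V"
  using ads[THEN conjunct2, THEN conjunct2, THEN conjunct1] by blast
lemma Esym: "\<And>u v. E u v \<Longrightarrow> E v u"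
  using ads[THEN conjunct2, THEN conjunct2, THEN conjunct2, THEN conjunct1] by blast
lemma conn: "\<And>u v. u \<in> V \<Longrightarrow> v \<in> V \<Longrightarrow> E\<^sup>*\<^sup>* u v"
  using ads[THEN conjunct2, THEN conjunct2, THEN conjunct2, THEN conjunct2, THEN conjunct2, THEN conjunct1] by blast
lemma Ebos: "\<And>u v. E u v \<Longrightarrow> boson u \<noteq> boson v"
  using ads[THEN conjunct2, THEN conjunct2, THEN conjunct2, THEN conjunct2, THEN conjunct2, THEN conjunct2, THEN conjunct1] by blast
lemma Ecol: "\<And>u v. E u v \<Longrightarrow> col u v = col v u \<and> col u v \<in> {1..N}"
  using ads[THEN conjunct2, THEN conjunct2, THEN conjunct2, THEN conjunct2, THEN conjunct2, THEN conjunct2, THEN conjunct2, THEN conjunct1] by blast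
lemma Epar: "\<And>u v. E u v \<Longrightarrow> par u v = par v u"
  using ads[THEN conjunct2, THEN conjunct2, THEN conjunct2, THEN conjunct2, THEN conjunct2, THEN conjunct2, THEN conjunct2, THEN conjunct2, THEN conjunct1] by blast
lemma uniq: "\<And>v i. v\<in>V \<Longrightarrow> i\<in>{1..N} \<Longrightarrow> \<exists>!w. E v w \<and> col v w = i"
  using ads[THEN conjunct2, THEN conjunct2, THEN conjunct2, THEN conjunct2, THEN conjunct2, THEN conjunct2, THEN conjunct2, THEN conjunct2, THEN conjunct2, THEN conjunct1] by blast
lemma sq: "\<And>u v w i j. i \<noteq> j \<Longrightarrow> E u v \<Longrightarrow> col u v = i \<Longrightarrow> E v w \<Longrightarrow> col v w = j \<Longrightarrow>
        (\<exists>!x. E w x \<and> col w x = i \<and> E x u \<and> col x u = j)"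
  using ads[THEN conjunct2, THEN conjunct2, THEN conjunct2, THEN conjunct2, THEN conjunct2, THEN conjunct2, THEN conjunct2, THEN conjunct2, THEN conjunct2, THEN conjunct2, THEN conjunct1] by blast
lemma sqodd: "\<And>u v w x i j. i \<noteq> j \<Longrightarrow> E u v \<Longrightarrow> col u v = i \<Longrightarrow> E v w \<Longrightarrow> col v w = j \<Longrightarrow>
        E w x \<Longrightarrow> col w x = i \<Longrightarrow> E x u \<Longrightarrow> col x u = j \<Longrightarrow>
        odd (of_bool (par u v) + of_bool (par v w) + of_bool (par w x)
             + of_bool (par x u) :: nat)"
  using ads[THEN conjunct2, THEN conjunct2, THEN conjunct2, THEN conjunct2, THEN conjunct2, THEN conjunct2, THEN conjunct2, THEN conjunct2, THEN conjunct2, THEN conjunct2, THEN conjunct2] by blast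

definition sig :: "nat \<Rightarrow> 'v \<Rightarrow> 'v" where
  "sig i x = (if x \<in> V \<and> i \<in> {1..N} then (THE w. E x w \<and> col x w = i) else x)"

lemma sig_E: "x\<in>V \<Longrightarrow> i\<in>{1..N} \<Longrightarrow> E x (sig i x) \<and> col x (sig i x) = i"
  unfolding sig_def using theI'[OF uniq] by simp

lemma sig_unique:
  assumes "x \<in> V" "i\<in>{1..N}" "E x w" "col x w = i" shows "sig i x = w"
proof -
  have "(THE w. E x w \<and> col x w = i) = w"
    by (rule the1_equality[OF uniq[OF assms(1,2)]]) (use assms in simp)
  then show ?thesis unfolding sig_def using assms by simp
qed

lemma sig_V: "x \<in> V \<Longrightarrow> sig i x \<in> V"
  using sig_E EV by (metis sig_def)

lemma sig_out: "x \<notin> V \<or> i \<notin> {1..N} \<Longrightarrow> sig i x = x"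
  unfolding sig_def by auto

lemma sig_sig: "sig i (sig i x) = x"
proof (cases "x \<in> V \<and> i \<in> {1..N}")
  case True
  then have "E x (sig i x) \<and> col x (sig i x) = i" by (simp add: sig_E)
  then have "E (sig i x) x \<and> col (sig i x) x = i" using Esym Ecol by metis
  then show ?thesis using sig_unique True sig_V by blast
next
  case False then show ?thesis by (metis sig_out)
qed

lemma edge: assumes "E x y" shows "x \<in> V \<and> y \<in> V \<and> col x y \<in> {1..N} \<and> y = sig (col x y) x"
proof -
  have "x \<in> V" "y \<in> V" using EV assms by auto
  moreover have "col x y \<in> {1..N}" using Ecol assms by blast
  moreover have "sig (col x y) x = y" by (rule sig_unique) (use assms calculation in auto)
  ultimately show ?thesis by simp
qed

lemma sig_comm: "sig i (sig j x) = sig j (sig i x)"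
proof -
  consider "i = j" | "x \<notin> V" | "i \<notin> {1..N}" | "j \<notin> {1..N}" | "i \<noteq> j \<and> x \<in> V \<and> i \<in> {1..N} \<and> j \<in> {1..N}"
    by blast
  then show ?thesis
  proof cases
    case 1 then show ?thesis by simp
  next
    case 2 then show ?thesis by (simp add: sig_out)
  next
    case 3 then show ?thesis by (simp add: sig_out)
  next
    case 4 then show ?thesis by (simp add: sig_out)
  next
    case 5
    define v where "v = sig i x"
    define w where "w = sig j v"
    have v: "E x v" "col x v = i" "v \<in> V" using sig_E sig_V 5 v_def by auto
    have w: "E v w" "col v w = j" "w \<in> V" using sig_E sig_V 5 w_def v by auto
    obtain y where y: "E w y" "col w y = i" "E y x" "col y x = j"
      using sq[of i j x v w] 5 v w by blast
    have y1: "y = sig i w" using sig_unique[of w i y] y w 5 by simp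
    have "y \<in> V" using y EV by blast
    then have "x = sig j y" using sig_unique[of y j x] y 5 by simp
    then have "sig j x = y" by (simp add: sig_sig)
    then have "sig i (sig j x) = w" using y1 by (simp add: sig_sig)
    then show ?thesis using w_def v_def by simp
  qed
qed

interpretation cf: comp_fun_commute sig
  by unfold_locales (auto simp: sig_comm)

definition tr :: "nat set \<Rightarrow> 'v \<Rightarrow> 'v" where "tr A x = Finite_Set.fold sig x A"

lemma tr_empty[simp]: "tr {} x = x" by (simp add: tr_def)

lemma tr_insert: "finite A \<Longrightarrow> k \<notin> A \<Longrightarrow> tr (insert k A) x = sig k (tr A x)"
  by (simp add: tr_def)

lemma tr_comm: "finite A \<Longrightarrow> sig k (tr A x) = tr A (sig k x)"
  unfolding tr_def by (rule cf.fold_fun_left_comm) auto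

lemma tr_V: "finite A \<Longrightarrow> x \<in> V \<Longrightarrow> tr A x \<in> V"
  by (induction A rule: finite_induct) (auto simp: tr_insert sig_V)

lemma tr_sym: "finite A \<Longrightarrow> tr (A - {k} \<union> ({k} - A)) x = sig k (tr A x)"
proof (cases "k \<in> A")
  case True
  assume f: "finite A"
  have A: "A = insert k (A - {k})" using True by blast
  have "tr A x = sig k (tr (A - {k}) x)" using tr_insert[of "A - {k}" k x] f A by simp
  then show ?thesis using True by (simp add: sig_sig Un_absorb2)
next
  case False
  assume f: "finite A"
  then show ?thesis using False tr_insert by simp
qed

lemma tr_tr: "finite A \<Longrightarrow> tr A (tr A x) = x"
proof (induction A rule: finite_induct)
  case empty then show ?case by simp
next
  case (insert k A)
  then show ?case by (simp add: tr_insert tr_comm[symmetric] sig_sig)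
qed

definition crd :: "'v \<Rightarrow> 'v \<Rightarrow> nat set" where
  "crd b x = inv_into (Pow {1..N}) (\<lambda>A. tr A b) x"

lemma img: assumes b: "b \<in> V" shows "(\<lambda>A. tr A b) ` Pow {1..N} = V"
proof
  show "(\<lambda>A. tr A b) ` Pow {1..N} \<subseteq> V"
    using tr_V b by (auto intro: finite_subset)
next
  show "V \<subseteq> (\<lambda>A. tr A b) ` Pow {1..N}"
  proof
    fix x assume "x \<in> V"
    then have "E\<^sup>*\<^sup>* b x" using conn b by blast
    then show "x \<in> (\<lambda>A. tr A b) ` Pow {1..N}"
    proof (induction rule: rtranclp_induct)
      case base
      then show ?case by (rule image_eqI[of _ _ "{}"]) auto
    next
      case (step y z)
      then obtain A where A: "A \<subseteq> {1..N}" "y = tr A b" by auto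
      have fA: "finite A" using A finite_subset by blast
      have e: "col y z \<in> {1..N}" "z = sig (col y z) y" using edge step by auto
      have "z = tr (A - {col y z} \<union> ({col y z} - A)) b"
        using tr_sym[OF fA] A e by simp
      moreover have "A - {col y z} \<union> ({col y z} - A) \<in> Pow {1..N}" using A e by auto
      ultimately show ?case by blast
    qed
  qed
qed

lemma inj: assumes b: "b \<in> V" shows "inj_on (\<lambda>A. tr A b) (Pow {1..N})"
proof (rule eq_card_imp_inj_on)
  show "finite (Pow {1..N})" by simp
  show "card ((\<lambda>A. tr A b) ` Pow {1..N}) = card (Pow {1..N})"
    using img[OF b] cardV by (simp add: card_Pow)
qed

lemma crd_sub: "b\<in>V \<Longrightarrow> x\<in>V \<Longrightarrow> crd b x \<subseteq> {1..N}"
  unfolding crd_def using inv_into_into[of x "\<lambda>A. tr A b" "Pow {1..N}"] img by auto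

lemma crd_tr: "b\<in>V \<Longrightarrow> x\<in>V \<Longrightarrow> tr (crd b x) b = x"
  unfolding crd_def using f_inv_into_f[of x "\<lambda>A. tr A b" "Pow {1..N}"] img by auto

lemma crd_sig: assumes "b\<in>V" "x\<in>V" "k\<in>{1..N}"
  shows "crd b (sig k x) = crd b x - {k} \<union> ({k} - crd b x)"
proof -
  have f: "finite (crd b x)" using crd_sub assms finite_subset by blast
  have A: "crd b x - {k} \<union> ({k} - crd b x) \<in> Pow {1..N}" using crd_sub[OF assms(1,2)] assms(3) by auto
  have B: "tr (crd b x - {k} \<union> ({k} - crd b x)) b = sig k x"
    using tr_sym[OF f, of k b] crd_tr[OF assms(1,2)] by simp
  show ?thesis unfolding crd_def
    by (rule inv_into_f_eq[OF inj[OF assms(1)] A[unfolded crd_def] B[unfolded crd_def]])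
qed

definition good :: "('v \<Rightarrow> 'v) \<Rightarrow> bool" where
  "good f = (\<exists>S. \<forall>x y. E x y \<longrightarrow> par (f x) (f y) = (par x y \<noteq> ((x\<in>S) \<noteq> (y\<in>S))))"

lemma good_id: "good (\<lambda>x. x)"
  unfolding good_def by (rule exI[of _ "{}"]) simp

lemma xor2: fixes P a c s1 s2 t1 t2 :: bool shows "P = (a \<noteq> (s1 \<noteq> s2)) \<Longrightarrow> a = (c \<noteq> (t1 \<noteq> t2)) \<Longrightarrow> P = (c \<noteq> ((t1 \<noteq> s1) \<noteq> (t2 \<noteq> s2)))"
  by (cases s1; cases s2; cases t1; cases t2) auto

lemma good_comp:
  assumes "good f" "good h" "\<And>x y. E x y \<Longrightarrow> E (h x) (h y)"
  shows "good (\<lambda>x. f (h x))"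
proof -
  obtain Sf where Sf: "\<forall>x y. E x y \<longrightarrow> par (f x) (f y) = (par x y \<noteq> ((x\<in>Sf) \<noteq> (y\<in>Sf)))"
    using assms(1) unfolding good_def by blast
  obtain Sh where Sh: "\<forall>x y. E x y \<longrightarrow> par (h x) (h y) = (par x y \<noteq> ((x\<in>Sh) \<noteq> (y\<in>Sh)))"
    using assms(2) unfolding good_def by blast
  show ?thesis unfolding good_def
  proof (rule exI[of _ "{x. (x \<in> Sh) \<noteq> (h x \<in> Sf)}"], intro allI impI)
    fix x y assume "E x y"
    then show "par (f (h x)) (f (h y)) = (par x y \<noteq> ((x \<in> {x. (x \<in> Sh) \<noteq> (h x \<in> Sf)}) \<noteq> (y \<in> {x. (x \<in> Sh) \<noteq> (h x \<in> Sf)})))"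
      using xor2[OF Sf[rule_format, OF assms(3)[OF \<open>E x y\<close>]] Sh[rule_format, OF \<open>E x y\<close>]]
      by simp
  qed
qed

lemma sig_edge: assumes "E x y" shows "E (sig k x) (sig k y) \<and> col (sig k x) (sig k y) = col x y"
proof (cases "k \<in> {1..N}")
  case False then show ?thesis using assms by (simp add: sig_out)
next
  case True
  define j where "j = col x y"
  have e: "x \<in> V" "y \<in> V" "j \<in> {1..N}" "y = sig j x" using edge[OF assms] j_def by auto
  show ?thesis
  proof (cases "j = k")
    case True
    then have "sig k x = y" "sig k y = x" using e sig_sig by auto
    then show ?thesis using assms Esym Ecol by metis
  next
    case False
    have "sig k y = sig j (sig k x)" using e sig_comm by simp
    moreover have "sig k x \<in> V" using sig_V e by simp
    moreover have "E (sig k x) (sig j (sig k x)) \<and> col (sig k x) (sig j (sig k x)) = j"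
      using sig_E[OF \<open>sig k x \<in> V\<close> e(3)] .
    ultimately show ?thesis by (simp add: j_def)
  qed
qed

lemma tr_edge: "finite A \<Longrightarrow> E x y \<Longrightarrow> E (tr A x) (tr A y) \<and> col (tr A x) (tr A y) = col x y"
proof (induction A rule: finite_induct)
  case empty then show ?case by simp
next
  case (insert k A)
  then show ?case using sig_edge[of "tr A x" "tr A y" k] by (simp add: tr_insert)
qed

lemma good_sig: assumes b: "b\<in>V" and k: "k \<in> {1..N}" shows "good (sig k)"
  unfolding good_def
proof (rule exI[of _ "{x. par x (sig k x) \<noteq> (boson x \<noteq> (k \<in> crd b x))}"], intro allI impI)
  fix x y assume xy: "E x y"
  define j where "j = col x y"
  have e: "x \<in> V" "y \<in> V" "j \<in> {1..N}" "y = sig j x" using edge[OF xy] j_def by auto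
  have bo: "boson x \<noteq> boson y" using Ebos xy by blast
  have cy: "crd b y = crd b x - {j} \<union> ({j} - crd b x)" using crd_sig b e by simp
  show "par (sig k x) (sig k y) = (par x y \<noteq>
      ((x \<in> {x. par x (sig k x) \<noteq> (boson x \<noteq> (k \<in> crd b x))}) \<noteq>
       (y \<in> {x. par x (sig k x) \<noteq> (boson x \<noteq> (k \<in> crd b x))})))"
  proof (cases "j = k")
    case True
    then have s: "sig k x = y" "sig k y = x" using e sig_sig by auto
    have "par y x = par x y" using Epar xy by metis
    moreover have "(k \<in> crd b y) = (k \<notin> crd b x)" using cy True by auto
    moreover have "boson y = (\<not> boson x)" using bo by auto
    ultimately show ?thesis unfolding mem_Collect_eq s
      by (cases "par x y"; cases "boson x"; cases "k \<in> crd b x") simp_all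
  next
    case False
    have ex: "E x (sig k x)" "col x (sig k x) = k" using sig_E e k by auto
    have ey: "E y (sig k y)" "col y (sig k y) = k" using sig_E e k by auto
    have exy: "E (sig k x) (sig k y)" "col (sig k x) (sig k y) = j" using sig_edge[OF xy] j_def by auto
    have o: "odd (of_bool (par x (sig k x)) + of_bool (par (sig k x) (sig k y)) + of_bool (par (sig k y) y)
             + of_bool (par y x) :: nat)"
    proof (rule sqodd[of k j x "sig k x" "sig k y" y])
      show "k \<noteq> j" using False by simp
      show "E x (sig k x)" "col x (sig k x) = k" by (fact ex)+
      show "E (sig k x) (sig k y)" "col (sig k x) (sig k y) = j" by (fact exy)+
      show "E (sig k y) y" using Esym ey by blast
      show "col (sig k y) y = k" using Ecol ey by metis
      show "E y x" using Esym xy by blast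
      show "col y x = j" using Ecol xy j_def by metis
    qed
    have p1: "par (sig k y) y = par y (sig k y)" using Epar ey by metis
    have p2: "par y x = par x y" using Epar xy by metis
    have "(k \<in> crd b y) = (k \<in> crd b x)" using cy False by auto
    moreover have "boson y = (\<not> boson x)" using bo by auto
    moreover note o[unfolded odd4 p1 p2]
    ultimately show ?thesis unfolding mem_Collect_eq
      by (cases "par x y"; cases "boson x"; cases "k \<in> crd b x"; cases "par x (sig k x)";
          cases "par y (sig k y)"; cases "par (sig k x) (sig k y)") simp_all
  qed
qed

lemma tr_good: "finite A \<Longrightarrow> A \<subseteq> {1..N} \<Longrightarrow> b \<in> V \<Longrightarrow> good (tr A)"
proof (induction A rule: finite_induct)
  case empty
  then show ?case using good_id by (simp add: tr_def[abs_def])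
next
  case (insert k A)
  have "tr (insert k A) = (\<lambda>x. sig k (tr A x))" using insert by (simp add: tr_insert fun_eq_iff)
  moreover have "good (\<lambda>x. sig k (tr A x))"
  proof (rule good_comp[of "sig k" "tr A"])
    show "good (sig k)" using good_sig insert by auto
    show "good (tr A)" using insert by auto
    show "\<And>x y. E x y \<Longrightarrow> E (tr A x) (tr A y)" using tr_edge insert by blast
  qed
  ultimately show ?case by simp
qed

lemma main:
  assumes u: "u \<in> V" and v: "v \<in> V" and bb: "boson u = boson v"
  shows "\<exists>f. adinkra_automorphism V E boson col par f \<and> f u = v"
proof -
  define T where "T = crd u v"
  have TN: "T \<subseteq> {1..N}" using crd_sub u v T_def by simp
  have fT: "finite T" using TN finite_subset by blast
  define f where "f = tr T"
  have fV: "\<And>x. x \<in> V \<Longrightarrow> f x \<in> V" using tr_V fT f_def by simp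
  have ff: "\<And>x. f (f x) = x" using tr_tr fT f_def by simp
  have fe: "\<And>x y. E x y \<Longrightarrow> E (f x) (f y) \<and> col (f x) (f y) = col x y" using tr_edge fT f_def by simp
  have fu: "f u = v" using crd_tr u v f_def T_def by simp
  have bij: "bij_betw f V V"
    by (rule bij_betw_byWitness[where f'=f]) (use ff fV in auto)
  have eiff: "\<forall>a\<in>V. \<forall>b\<in>V. E (f a) (f b) \<longleftrightarrow> E a b"
  proof (intro ballI iffI)
    fix a b assume "E (f a) (f b)"
    then have "E (f (f a)) (f (f b))" using fe by blast
    then show "E a b" using ff by simp
  next
    fix a b assume "E a b" then show "E (f a) (f b)" using fe by blast
  qed
  have bos: "\<forall>x\<in>V. boson (f x) = boson x"
  proof
    fix x assume "x \<in> V"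
    then have "E\<^sup>*\<^sup>* u x" using conn u by blast
    then show "boson (f x) = boson x"
    proof (induction rule: rtranclp_induct)
      case base then show ?case using fu bb by simp
    next
      case (step y z)
      have "boson y \<noteq> boson z" "boson (f y) \<noteq> boson (f z)" using Ebos step fe by blast+
      then show ?case using step by auto
    qed
  qed
  obtain S where S: "\<forall>x y. E x y \<longrightarrow> par (f x) (f y) = (par x y \<noteq> ((x\<in>S) \<noteq> (y\<in>S)))"
  proof -
    have "good f" using tr_good[OF fT TN u] f_def by simp
    then show ?thesis unfolding good_def using that by blast
  qed
  have X1: "\<forall>x y. E x y \<longrightarrow> par (f x) (f y) = (par x y \<noteq> ((x\<in>S \<inter> V) \<noteq> (y\<in>S \<inter> V)))"
  proof (intro allI impI)
    fix x y assume xy: "E x y"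
    then have "x \<in> V" "y \<in> V" using EV by auto
    then show "par (f x) (f y) = (par x y \<noteq> ((x\<in>S \<inter> V) \<noteq> (y\<in>S \<inter> V)))"
      using S xy by simp
  qed
  have X: "\<exists>S\<subseteq>V. \<forall>x y. E x y \<longrightarrow> par (f x) (f y) = (par x y \<noteq> ((x\<in>S) \<noteq> (y\<in>S)))"
    by (rule exI[of _ "S \<inter> V"], rule conjI, blast, rule X1)
  have fc: "\<forall>u v. E u v \<longrightarrow> col (f u) (f v) = col u v" using fe by blast
  have "adinkra_automorphism V E boson col par f"
    unfolding adinkra_automorphism_def
    by (rule conjI[OF bij conjI[OF eiff conjI[OF fc conjI[OF bos X]]]])
  then show ?thesis using fu by blast
qed

end

theorem mainTheorem3:
  fixes N :: nat and V :: "'v set" and E :: "'v \<Rightarrow> 'v \<Rightarrow> bool"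
    and boson :: "'v \<Rightarrow> bool" and col :: "'v \<Rightarrow> 'v \<Rightarrow> nat"
    and par :: "'v \<Rightarrow> 'v \<Rightarrow> bool"
  assumes "cube_adinkra N V E boson col par"
    and "u \<in> V" and "v \<in> V" and "boson u = boson v"
  shows "\<exists>f. adinkra_automorphism V E boson col par f \<and> f u = v"
proof -
  interpret cube_ad N V E boson col par using assms(1) by unfold_locales
  show ?thesis using main assms(2-4) by blast
qed

end
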